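(* For every $\theta\in[0,\pi)$, $\overline Q^{\,\theta}_S$ has a unique minimiser on $\mathbb{R}^2$, namely $$(\alpha^S_\theta,\beta^S_\theta)=\Big(-\frac k2(1+\cos2\theta),\ \frac k2\sin2\theta\Big),$$ and $\min_{\mathbb{R}^2}\overline Q^{\,\theta}_S=\bar e_S$.
   Context: Fix constants $c_1>0$, $c_2>0$, $c:=c_1+c_2$, $k>0$, $\bar e_S\ge0$, $\theta\in[0,\pi)$. Let $\bar A^\theta_S:=k\begin{pmatrix}-\cos^2\theta&\sin\theta\cos\theta\\ \sin\theta\cos\theta&-\sin^2\theta\end{pmatrix}$. For matrices $M\cdot N={\rm tr}(M^{\rm T}N)$, $|M|^2=M\cdot M$. For $M\in\mathbb{R}^{2\times2}_{\rm sym}$, $L^\theta_S(M):=-2c_1M\cdot\bar A^\theta_S+2c_2k\,{\rm tr}M+ck^2+\bar e_S$. For $(\alpha,\beta)\in\mathbb{R}^2$, $$\overline Q^{\,\theta}_S(\alpha,\beta):=\min_{\gamma\in\mathbb{R}}\Big\{c|M|^2+2c|\det M|+L^\theta_S(M): M=\begin{pmatrix}\alpha&\beta\\ \beta&\gamma\end{pmatrix}\Big\}.$$ *)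

theory Defs
  imports "HOL-Analysis.Analysis"
begin

definition frob :: "real^2^2 \<Rightarrow> real^2^2 \<Rightarrow> real" where
  "frob M N = trace (transpose M ** N)"

definition sqnorm :: "real^2^2 \<Rightarrow> real" where
  "sqnorm M = frob M M"

definition mat2 :: "real \<Rightarrow> real \<Rightarrow> real \<Rightarrow> real \<Rightarrow> real^2^2" where
  "mat2 a b c d = vector [vector [a, b], vector [c, d]]"

definition Abar :: "real \<Rightarrow> real \<Rightarrow> real^2^2" where
  "Abar k \<theta> = k *\<^sub>R mat2 (- (cos \<theta>)\<^sup>2) (sin \<theta> * cos \<theta>) (sin \<theta> * cos \<theta>) (- (sin \<theta>)\<^sup>2)"

definition LS :: "real \<Rightarrow> real \<Rightarrow> real \<Rightarrow> real \<Rightarrow> real \<Rightarrow> real^2^2 \<Rightarrow> real" where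
  "LS c1 c2 k eS \<theta> M = - 2 * c1 * frob M (Abar k \<theta>) + 2 * c2 * k * trace M
      + (c1 + c2) * k\<^sup>2 + eS"

definition QS_integrand :: "real \<Rightarrow> real \<Rightarrow> real \<Rightarrow> real \<Rightarrow> real \<Rightarrow> real^2^2 \<Rightarrow> real" where
  "QS_integrand c1 c2 k eS \<theta> M =
     (c1 + c2) * sqnorm M + 2 * (c1 + c2) * \<bar>det M\<bar> + LS c1 c2 k eS \<theta> M"

(* \bar Q^\theta_S(\alpha,\beta) = min over gamma (the min is attained; written as Inf) *)
definition Qbar :: "real \<Rightarrow> real \<Rightarrow> real \<Rightarrow> real \<Rightarrow> real \<Rightarrow> real \<times> real \<Rightarrow> real" where
  "Qbar c1 c2 k eS \<theta> p =
     (INF \<gamma>::real. QS_integrand c1 c2 k eS \<theta> (mat2 (fst p) (snd p) (snd p) \<gamma>))"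

end

theory Submission
  imports Defs
begin

lemma formula: "QS_integrand c1 c2 k eS t (mat2 a b b g) =
  (c1+c2) * (a^2+2 * b^2+g^2) + 2 * (c1+c2) * \<bar>a * g-b^2\<bar> + 2 * c1 * k * (a * (cos t)^2 - 2 * b * (sin t) * (cos t) + g * (sin t)^2)
  + 2 * c2 * k * (a+g) + (c1+c2) * k^2 + eS"
  unfolding QS_integrand_def LS_def sqnorm_def frob_def Abar_def mat2_def
  by (simp add: trace_def matrix_matrix_mult_def transpose_def det_2 sum_2 vector_2 power2_eq_square algebra_simps)

lemma key:
  fixes a b g s co c1 c2 k :: real
  assumes sc: "s^2 + co^2 = 1" and c1: "c1 > 0" and c2: "c2 > 0" and k: "k > 0"
  defines "F \<equiv> (c1+c2) * (a^2+2 * b^2+g^2) + 2 * (c1+c2) * \<bar>a * g-b^2\<bar> + 2 * c1 * k * (a * co^2 - 2 * b * s * co + g * s^2)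
  + 2 * c2 * k * (a+g) + (c1+c2) * k^2"
  shows "F \<ge> 0" and "F = 0 \<Longrightarrow> a = -k * co^2 \<and> b = k * s * co"
proof -
  define p where "p = a * co^2 - 2 * b * co * s + g * s^2"
  define q where "q = a * co * s + b * (co^2-s^2) - g * s * co"
  define r where "r = a * s^2 + 2 * b * s * co + g * co^2"
  define c where "c = c1 + c2"
  have e1: "a^2+2 * b^2+g^2 = p^2+2 * q^2+r^2" unfolding p_def q_def r_def using sc by algebra
  have e2: "a * g-b^2 = p * r-q^2" unfolding p_def q_def r_def using sc by algebra
  have e3: "a+g = p+r" unfolding p_def r_def using sc by algebra
  have e4: "a * co^2 - 2 * b * s * co + g * s^2 = p" unfolding p_def by algebra
  have ia: "a = p * co^2 + 2 * q * co * s + r * s^2" unfolding p_def q_def r_def using sc by algebra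
  have ib: "b = -p * co * s + q * (co^2-s^2) + r * s * co" unfolding p_def q_def r_def using sc by algebra
  have Fe: "F = c * (p+k)^2 + 2 * c * q^2 + c * r^2 + 2 * c * \<bar>p * r-q^2\<bar> + 2 * c2 * k * r"
    unfolding F_def e1 e2 e3 e4 c_def by (simp add: power2_eq_square algebra_simps)
  have cpos: "c > 0" using c1 c2 c_def by simp
  have main: "F \<ge> c * (p+k)^2 + 2 * c * q^2 + c * r^2 \<or> (r < 0 \<and> F \<ge> c * (p+k+r)^2 - 2 * c1 * k * r)"
  proof (cases "r \<ge> 0")
    case True
    have "0 \<le> 2 * c * \<bar>p * r-q^2\<bar>" using cpos by simp
    moreover have "0 \<le> 2 * c2 * k * r" using True c2 k by simp
    ultimately show ?thesis unfolding Fe by auto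
  next
    case False
    have "\<bar>p * r-q^2\<bar> \<ge> p * r - q^2" by simp
    hence "2 * c * \<bar>p * r-q^2\<bar> \<ge> 2 * c * (p * r - q^2)" using cpos by simp
    moreover have "c * r^2 \<ge> 0" using cpos by simp
    ultimately have "F \<ge> c * (p+k)^2 + c * r^2 + 2 * c * p * r + 2 * c2 * k * r" unfolding Fe
      by (simp add: algebra_simps)
    also have "c * (p+k)^2 + c * r^2 + 2 * c * p * r + 2 * c2 * k * r = c * (p+k+r)^2 - 2 * c1 * k * r"
      unfolding c_def by (simp add: power2_eq_square algebra_simps)
    finally show ?thesis using False by auto
  qed
  have nn: "c * (p+k)^2 + 2 * c * q^2 + c * r^2 \<ge> 0" using cpos by simp
  have pos2: "r < 0 \<Longrightarrow> c * (p+k+r)^2 - 2 * c1 * k * r > 0"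
  proof -
    assume "r < 0"
    hence "- 2 * c1 * k * r > 0" using c1 k by (simp add: mult_pos_neg)
    moreover have "c * (p+k+r)^2 \<ge> 0" using cpos by simp
    ultimately show ?thesis by linarith
  qed
  show "F \<ge> 0" using main nn pos2 by fastforce
  assume F0: "F = 0"
  have "c * (p+k)^2 + 2 * c * q^2 + c * r^2 \<le> 0" using main F0 pos2 by fastforce
  moreover have "c * (p+k)^2 \<ge> 0" "c * q^2 \<ge> 0" "c * r^2 \<ge> 0" using cpos by simp_all
  ultimately have "c * (p+k)^2 = 0" "c * q^2 = 0" "c * r^2 = 0" by linarith+
  hence "p = -k" "q = 0" "r = 0" using cpos by auto
  thus "a = -k * co^2 \<and> b = k * s * co" using ia ib by simp
qed

lemma attain:
  fixes c1 c2 k eS t a b :: real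
  assumes c1: "c1 > 0" and c2: "c2 > 0" and k: "k > 0"
  shows "\<exists>g0. \<forall>g. QS_integrand c1 c2 k eS t (mat2 a b b g0) \<le> QS_integrand c1 c2 k eS t (mat2 a b b g)"
proof -
  define F where "F = (\<lambda>g. QS_integrand c1 c2 k eS t (mat2 a b b g))"
  define c where "c = c1 + c2"
  define D where "D = 2 * c1 * k + 2 * c2 * k"
  define E0 where "E0 = c * k^2 + eS + 2 * c1 * k * (a * (cos t)^2 - 2 * b * (sin t) * (cos t)) + 2 * c2 * k * a"
  have cpos: "c > 0" using c1 c2 c_def by simp
  have lb: "F g \<ge> c * g^2 - D * \<bar>g\<bar> + E0" for g
  proof -
    have s1: "(sin t)^2 \<le> 1" by (simp add: abs_square_le_1)
    have h1: "2 * c1 * k * (g * (sin t)^2) \<ge> - (2 * c1 * k) * \<bar>g\<bar>"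
    proof -
      have "\<bar>g * (sin t)^2\<bar> \<le> \<bar>g\<bar>" using s1 by (simp add: abs_mult mult_left_le)
      hence "g * (sin t)^2 \<ge> - \<bar>g\<bar>" by linarith
      moreover have "2 * c1 * k > 0" using c1 k by simp
      ultimately have "(2 * c1 * k) * (g * (sin t)^2) \<ge> (2 * c1 * k) * (- \<bar>g\<bar>)"
        by (intro mult_left_mono) auto
      thus ?thesis by simp
    qed
    have h2: "2 * c2 * k * g \<ge> - (2 * c2 * k) * \<bar>g\<bar>"
    proof -
      have "2 * c2 * k > 0" using c2 k by simp
      moreover have "g \<ge> - \<bar>g\<bar>" by simp
      ultimately have "(2 * c2 * k) * g \<ge> (2 * c2 * k) * (- \<bar>g\<bar>)" by (intro mult_left_mono) auto
      thus ?thesis by simp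
    qed
    have h3: "(c1+c2) * (a^2+2 * b^2+g^2) \<ge> c * g^2" using cpos unfolding c_def
      by (simp add: mult_left_mono)
    have h4: "2 * (c1+c2) * \<bar>a * g-b^2\<bar> \<ge> 0" using cpos c_def by simp
    show ?thesis unfolding F_def formula D_def E0_def using h1 h2 h3 h4 unfolding c_def
      by (simp add: algebra_simps)
  qed
  have cont: "continuous_on UNIV F" unfolding F_def formula by (intro continuous_intros)
  define R where "R = max 1 ((D + \<bar>F 0 - E0\<bar> + 1) / c)"
  obtain g0 where g0: "g0 \<in> cball 0 R" "\<forall>y\<in>cball 0 R. F g0 \<le> F y"
    using continuous_attains_inf[of "cball 0 R" F] cont compact_cball[of 0 R]
    by (metis R_def centre_in_cball continuous_on_subset empty_iff max.cobounded1 order_trans zero_le_one subset_UNIV)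
  have "F g0 \<le> F g" for g
  proof (cases "\<bar>g\<bar> \<le> R")
    case True thus ?thesis using g0 by (simp add: dist_real_def)
  next
    case False
    have R1: "R \<ge> 1" and R2: "R \<ge> (D + \<bar>F 0 - E0\<bar> + 1) / c" unfolding R_def by auto
    have "c * \<bar>g\<bar> \<ge> D + \<bar>F 0 - E0\<bar> + 1"
    proof -
      have "\<bar>g\<bar> \<ge> (D + \<bar>F 0 - E0\<bar> + 1) / c" using False R2 by linarith
      thus ?thesis using cpos by (simp add: field_simps)
    qed
    hence "c * \<bar>g\<bar> - D \<ge> \<bar>F 0 - E0\<bar> + 1" by linarith
    moreover have "\<bar>g\<bar> \<ge> 1" using False R1 by linarith
    ultimately have "\<bar>g\<bar> * (c * \<bar>g\<bar> - D) \<ge> 1 * (\<bar>F 0 - E0\<bar> + 1)"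
      by (intro mult_mono) auto
    moreover have "c * g^2 - D * \<bar>g\<bar> = \<bar>g\<bar> * (c * \<bar>g\<bar> - D)"
      by (simp add: power2_eq_square algebra_simps abs_mult_self_eq)
    ultimately have X: "c * g^2 - D * \<bar>g\<bar> \<ge> \<bar>F 0 - E0\<bar> + 1" by simp
    have "\<bar>F 0 - E0\<bar> \<ge> F 0 - E0" by simp
    hence "F g > F 0" using lb[of g] X by linarith
    moreover have "F g0 \<le> F 0" using g0 R1 by simp
    ultimately show ?thesis by linarith
  qed
  thus ?thesis unfolding F_def by blast
qed

theorem lemma4p2:
  fixes c1 c2 k eS \<theta> :: real
  assumes "c1 > 0" and "c2 > 0" and "k > 0" and "eS \<ge> 0"
    and "\<theta> \<in> {0..<pi}"
  shows "(\<forall>p. (\<forall>q. Qbar c1 c2 k eS \<theta> p \<le> Qbar c1 c2 k eS \<theta> q)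
              \<longleftrightarrow> p = (- k / 2 * (1 + cos (2 * \<theta>)), k / 2 * sin (2 * \<theta>)))
       \<and> Qbar c1 c2 k eS \<theta> (- k / 2 * (1 + cos (2 * \<theta>)), k / 2 * sin (2 * \<theta>)) = eS"
proof -
  note c1 = assms(1) and c2 = assms(2) and k = assms(3)
  define s where "s = sin \<theta>"
  define co where "co = cos \<theta>"
  have sc: "s^2 + co^2 = 1" unfolding s_def co_def by simp
  define T where "T = (- k / 2 * (1 + cos (2 * \<theta>)), k / 2 * sin (2 * \<theta>))"
  have T: "T = (-k * co^2, k * s * co)" unfolding T_def s_def co_def
    using cos_double_cos[of \<theta>] sin_double[of \<theta>] by (simp add: algebra_simps)
  let ?Q = "Qbar c1 c2 k eS \<theta>"
  let ?I = "\<lambda>a b g. QS_integrand c1 c2 k eS \<theta> (mat2 a b b g)"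
  have Ige: "?I a b g \<ge> eS" for a b g
    using key(1)[OF sc c1 c2 k, of a b g] unfolding formula s_def co_def by simp
  have Ieq: "?I a b g = eS \<Longrightarrow> a = -k * co^2 \<and> b = k * s * co" for a b g
    using key(2)[OF sc c1 c2 k, of a b g] unfolding formula s_def co_def by simp
  have bdd: "bdd_below (range (?I a b))" for a b using Ige by (intro bdd_belowI2) 
  have Qge: "?Q p \<ge> eS" for p unfolding Qbar_def by (rule cINF_greatest) (auto intro: Ige)
  have "?I (-k * co^2) (k * s * co) (-k * s^2) = eS"
  proof -
    have "(co^2+s^2)^2 = 1" using sc by (simp add: add.commute)
    hence q1: "co^4 + 2 * co^2 * s^2 + s^4 = 1" by (simp add: power2_eq_square power4_eq_xxxx algebra_simps)
    have f1: "(-k * co^2) * (-k * s^2) - (k * s * co)^2 = 0" by (simp add: power2_eq_square algebra_simps)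
    have "(-k * co^2) * (cos \<theta>)^2 - 2 * (k * s * co) * (sin \<theta>) * (cos \<theta>) + (-k * s^2) * (sin \<theta>)^2 = -k * (co^4 + 2 * co^2 * s^2 + s^4)"
      unfolding s_def co_def by (simp add: power2_eq_square power4_eq_xxxx algebra_simps)
    hence f2: "(-k * co^2) * (cos \<theta>)^2 - 2 * (k * s * co) * (sin \<theta>) * (cos \<theta>) + (-k * s^2) * (sin \<theta>)^2 = -k" using q1 by simp
    have "(-k * co^2) + (-k * s^2) = -k * (s^2 + co^2)" by (simp add: algebra_simps)
    hence f3: "(-k * co^2) + (-k * s^2) = -k" using sc by simp
    have "(-k * co^2)^2 + 2 * (k * s * co)^2 + (-k * s^2)^2 = k^2 * (co^4 + 2 * co^2 * s^2 + s^4)"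
      by (simp add: power2_eq_square power4_eq_xxxx algebra_simps)
    hence f4: "(-k * co^2)^2 + 2 * (k * s * co)^2 + (-k * s^2)^2 = k^2" using q1 by simp
    show ?thesis unfolding formula f1 f2 f3 f4
      by (simp add: power2_eq_square algebra_simps)
  qed
  hence "?Q T \<le> eS" unfolding Qbar_def T
    using cINF_lower[OF bdd[of "-k * co^2" "k * s * co"] UNIV_I, of "-k * s^2"] by simp
  hence QT: "?Q T = eS" using Qge[of T] by simp
  have "(\<forall>q. ?Q p \<le> ?Q q) \<longleftrightarrow> p = T" for p
  proof
    assume "\<forall>q. ?Q p \<le> ?Q q"
    hence "?Q p \<le> eS" using QT by metis
    obtain g0 where g0: "\<forall>g. ?I (fst p) (snd p) g0 \<le> ?I (fst p) (snd p) g"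
      using attain[OF c1 c2 k] by blast
    have "?I (fst p) (snd p) g0 \<le> ?Q p" unfolding Qbar_def
      by (rule cINF_greatest) (use g0 in auto)
    hence "?I (fst p) (snd p) g0 = eS" using \<open>?Q p \<le> eS\<close> Ige[of "fst p" "snd p" g0] by linarith
    from Ieq[OF this] show "p = T" unfolding T by (cases p) auto
  next
    assume "p = T" thus "\<forall>q. ?Q p \<le> ?Q q" using QT Qge by simp
  qed
  thus ?thesis using QT unfolding T_def by blast
qed

end
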